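(* Let $c>0$ and let $H,H_1,H_2,\ldots$ be i.i.d. positive random variables with $\mathbb P(H>x)=1/(1+cx)$ for $x\ge0$; set $H_0=+\infty$ and let $(\mathcal P_i)_{i\ge0}$ be independent Poisson point processes on $(0,\infty)$ with intensity $\theta>0$, independent of $(H_i)$. Let $S_n$ be the number of polymorphic sites in the sample $\{0,\ldots,n-1\}$. Then $S_n/(n\ln n)\to\theta/c$ in probability as $n\to\infty$.
   Context: Coalescent point process with mutations: the population is $\{0,1,2,\ldots\}$, the coalescence time between individuals $i<i+k$ is $\max\{H_{i+1},\ldots,H_{i+k}\}$. Denote the atoms of $\mathcal P_i$ by $\ell_{i1}<\ell_{i2}<\cdots$ (mutations). Individual $i+k$ ($k\ge0$) carries mutation $\ell_{ij}$ iff $\max\{H_{i+1},\ldots,H_{i+k}\}<\ell_{ij}<H_i$, with $\max\emptyset=0$. $S_n$ is the number of mutations carried by at least one and at most $n-1$ individuals of $\{0,\ldots,n-1\}$; explicitly $S_n=\mathrm{Card}\{(i,j):1\le i\le n-1,\,j\ge1,\,\ell_{ij}<H_i\}+\mathrm{Card}\{j\ge1:\ell_{0j}<\max\{H_1,\ldots,H_{n-1}\}\}$. *)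

theory Defs
  imports "HOL-Probability.Probability"
begin

text \<open>Atoms of the Poisson point process P_i on (0,infinity) with intensity theta,
  represented through i.i.d. Exp(theta) inter-arrival times E i 1, E i 2, ...:
  the j-th atom (j >= 1) is l_{ij} = E i 1 + ... + E i j.\<close>
definition atom :: "(nat \<Rightarrow> nat \<Rightarrow> 'a \<Rightarrow> real) \<Rightarrow> nat \<Rightarrow> nat \<Rightarrow> 'a \<Rightarrow> real" where
  "atom E i j \<omega> = (\<Sum>k\<in>{1..j}. E i k \<omega>)"

definition maxH :: "(nat \<Rightarrow> 'a \<Rightarrow> real) \<Rightarrow> nat \<Rightarrow> 'a \<Rightarrow> real" where
  "maxH H n \<omega> = (if n \<le> 1 then 0 else Max ((\<lambda>k. H k \<omega>) ` {1..<n}))"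

definition S :: "(nat \<Rightarrow> 'a \<Rightarrow> real) \<Rightarrow> (nat \<Rightarrow> nat \<Rightarrow> 'a \<Rightarrow> real) \<Rightarrow> nat \<Rightarrow> 'a \<Rightarrow> nat" where
  "S H E n \<omega> =
     card {(i, j). 1 \<le> i \<and> i \<le> n - 1 \<and> 1 \<le> j \<and> atom E i j \<omega> < H i \<omega>}
   + card {j. 1 \<le> j \<and> atom E 0 j \<omega> < maxH H n \<omega>}"

definition driving :: "(nat \<Rightarrow> 'a \<Rightarrow> real) \<Rightarrow> (nat \<Rightarrow> nat \<Rightarrow> 'a \<Rightarrow> real) \<Rightarrow> nat + nat \<times> nat \<Rightarrow> 'a \<Rightarrow> real" where
  "driving H E k = (case k of Inl i \<Rightarrow> H i | Inr (i, j) \<Rightarrow> E i j)"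

definition driving_index :: "(nat + nat \<times> nat) set" where
  "driving_index = Inl ` {i. 1 \<le> i} \<union> Inr ` {(i, j). 1 \<le> j}"

end

theory Submission
  imports Defs "HOL-Real_Asymp.Real_Asymp"
begin



lemma (in prob_space) indep_blocks:
  assumes ind: "indep_vars (\<lambda>_. borel) X I"
    and B: "\<And>l. l \<in> L \<Longrightarrow> B l \<subseteq> I" "disjoint_family_on B L"
    and f: "\<And>l. l \<in> L \<Longrightarrow> f l \<in> borel_measurable (PiM (B l) (\<lambda>_. borel))"
  shows "indep_vars (\<lambda>_. borel) (\<lambda>l \<omega>. f l (restrict (\<lambda>k. X k \<omega>) (B l))) L"
  using indep_vars_compose2[OF indep_vars_restrict[OF ind B] f] by simp

lemma (in prob_space) indep_pair:
  assumes ind: "indep_vars (\<lambda>_. borel) X I" and AB: "A \<inter> B = {}" "A \<subseteq> I" "B \<subseteq> I"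
    and f: "f \<in> borel_measurable (PiM A (\<lambda>_. borel))"
    and g: "g \<in> borel_measurable (PiM B (\<lambda>_. borel))"
  shows "indep_var borel (\<lambda>\<omega>. f (restrict (\<lambda>k. X k \<omega>) A)) borel (\<lambda>\<omega>. g (restrict (\<lambda>k. X k \<omega>) B))"
  using indep_var_compose[OF indep_var_restrict[OF ind AB] f g] by (simp add: comp_def)

lemma (in prob_space) E_indep:
  assumes ind: "indep_vars (\<lambda>_. borel) (driving H E) driving_index"
  shows "indep_vars (\<lambda>_. borel) (E i) {1..k}"
proof -
  have "indep_vars (\<lambda>_. borel) (\<lambda>j \<omega>. (\<lambda>x. x (Inr (i,j))) (restrict (\<lambda>k. driving H E k \<omega>) {Inr (i,j)})) {1..k}"
    by (rule indep_blocks[OF ind]) (auto simp: driving_index_def disjoint_family_on_def)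
  then show ?thesis
    by (simp add: driving_def)
qed

lemma (in prob_space) atom_erlang:
  assumes ind: "indep_vars (\<lambda>_. borel) (driving H E) driving_index"
    and th: "\<theta> > 0" and E_dist: "\<And>i j. 1 \<le> j \<Longrightarrow> distributed M lborel (E i j) (exponential_density \<theta>)"
    and k: "1 \<le> k"
  shows "distributed M lborel (atom E i k) (erlang_density (k - 1) \<theta>)"
proof -
  have "distributed M lborel (\<lambda>x. \<Sum>j\<in>{1..k}. E i j x) (erlang_density (card {1..k} - 1) \<theta>)"
    by (rule exponential_distributed_sum[OF _ _ th _ E_indep[OF ind]]) (use k E_dist in auto)
  moreover have "atom E i k = (\<lambda>x. \<Sum>j\<in>{1..k}. E i j x)"
    by (simp add: atom_def[abs_def])
  ultimately show ?thesis by simp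
qed




lemma borel_measurable_erlang_CDF[measurable]: "erlang_CDF k l \<in> borel_measurable borel"
  unfolding erlang_CDF_def[abs_def] by measurable

lemma (in prob_space) key:
  assumes ind: "indep_var borel Hh borel G"
    and G: "distributed M lborel G (erlang_density k \<theta>)" and th: "\<theta> > 0"
  shows "emeasure M {\<omega>\<in>space M. G \<omega> < Hh \<omega> \<and> Hh \<omega> \<le> t} =
     (\<integral>\<^sup>+\<omega>. ennreal (erlang_CDF k \<theta> (Hh \<omega>)) * indicator {..t} (Hh \<omega>) \<partial>M)"
proof -
  have rv: "random_variable borel Hh" "random_variable borel G"
    using ind by (auto dest: indep_var_rv1 indep_var_rv2)
  have eq: "distr M borel Hh \<Otimes>\<^sub>M distr M borel G = distr M (borel \<Otimes>\<^sub>M borel) (\<lambda>x. (Hh x, G x))"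
    using ind indep_var_distribution_eq by blast
  define A where "A = {p::real\<times>real. snd p < fst p \<and> fst p \<le> t}"
  have A: "A \<in> sets (borel \<Otimes>\<^sub>M borel)"
  proof -
    have "A = {p \<in> space (borel \<Otimes>\<^sub>M borel). snd p < fst p \<and> fst p \<le> t}"
      by (auto simp: A_def space_pair_measure)
    also have "\<dots> \<in> sets (borel \<Otimes>\<^sub>M borel)" by measurable
    finally show ?thesis .
  qed
  interpret Dg: prob_space "distr M borel G" using rv by (intro prob_space_distr) auto
  interpret Dh: prob_space "distr M borel Hh" using rv by (intro prob_space_distr) auto
  have "{\<omega>\<in>space M. G \<omega> < Hh \<omega> \<and> Hh \<omega> \<le> t} = (\<lambda>x. (Hh x, G x)) -` A \<inter> space M"
    by (auto simp: A_def)
  then have "emeasure M {\<omega>\<in>space M. G \<omega> < Hh \<omega> \<and> Hh \<omega> \<le> t} = emeasure (distr M (borel \<Otimes>\<^sub>M borel) (\<lambda>x. (Hh x, G x))) A"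
    using A rv by (simp add: emeasure_distr)
  also have "\<dots> = emeasure (distr M borel Hh \<Otimes>\<^sub>M distr M borel G) A"
    by (simp add: eq)
  also have "\<dots> = (\<integral>\<^sup>+y. emeasure (distr M borel G) (Pair y -` A) \<partial>distr M borel Hh)"
    using A by (simp add: Dg.emeasure_pair_measure_alt)
  also have "\<dots> = (\<integral>\<^sup>+y. ennreal (erlang_CDF k \<theta> y) * indicator {..t} y \<partial>distr M borel Hh)"
  proof (rule nn_integral_cong)
    fix y :: real
    have dG: "distr M borel G = density lborel (erlang_density k \<theta>)"
    proof -
      have "distr M borel G = distr M lborel G"
        by (rule distr_cong) auto
      then show ?thesis using distributed_distr_eq_density[OF G] by simp
    qed
    have "emeasure (density lborel (erlang_density k \<theta>)) {..<y} =
        (\<integral>\<^sup>+x. ennreal (erlang_density k \<theta> x) * indicator {..<y} x \<partial>lborel)"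
      by (simp add: emeasure_density)
    also have "\<dots> = (\<integral>\<^sup>+x. ennreal (erlang_density k \<theta> x) * indicator {..y} x \<partial>lborel)"
    proof (rule nn_integral_cong_AE)
      have "AE x in lborel. x \<noteq> y" by (rule AE_lborel_singleton)
      then show "AE x in lborel. ennreal (erlang_density k \<theta> x) * indicator {..<y} x = ennreal (erlang_density k \<theta> x) * indicator {..y} x"
        by eventually_elim (auto split: split_indicator)
    qed
    also have "\<dots> = erlang_CDF k \<theta> y"
      using th by (rule nn_integral_erlang_density)
    finally have *: "emeasure (distr M borel G) {..<y} = erlang_CDF k \<theta> y"
      by (simp add: dG)
    have "Pair y -` A = (if y \<le> t then {..<y} else {})"
      by (auto simp: A_def)
    then show "emeasure (distr M borel G) (Pair y -` A) = ennreal (erlang_CDF k \<theta> y) * indicator {..t} y"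
      using * by (auto split: split_indicator)
  qed
  also have "\<dots> = (\<integral>\<^sup>+\<omega>. ennreal (erlang_CDF k \<theta> (Hh \<omega>)) * indicator {..t} (Hh \<omega>) \<partial>M)"
    using rv by (subst nn_integral_distr) auto
  finally show ?thesis .
qed




lemma erlang_density_sum:
  assumes "0 \<le> x" "1 \<le> K"
  shows "(\<Sum>k<K. erlang_density k l x) = l * (1 - erlang_CDF (K - 1) l x)"
proof -
  have "{..K-1} = {..<K}" using assms by auto
  then have "l * (1 - erlang_CDF (K - 1) l x) = l * (\<Sum>n<K. (l * x)^n * exp (- l * x) / fact n)"
    using assms by (simp add: erlang_CDF_def)
  also have "\<dots> = (\<Sum>k<K. erlang_density k l x)"
    unfolding sum_distrib_left using assms
    by (intro sum.cong) (auto simp: erlang_density_def power_mult_distrib)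
  finally show ?thesis by simp
qed

lemma erlang_CDF_le1: "0 < l \<Longrightarrow> erlang_CDF k l x \<le> 1"
  unfolding erlang_CDF_def by (auto intro!: sum_nonneg)

lemma erlang_CDF_mono:
  assumes l: "0 < l" and xy: "x \<le> y"
  shows "erlang_CDF k l x \<le> erlang_CDF k l y"
proof -
  have "ennreal (erlang_CDF k l x) = (\<integral>\<^sup>+ z. ennreal (erlang_density k l z) * indicator {.. x} z \<partial>lborel)"
    using nn_integral_erlang_density[OF l] by simp
  also have "\<dots> \<le> (\<integral>\<^sup>+ z. ennreal (erlang_density k l z) * indicator {.. y} z \<partial>lborel)"
    using xy by (intro nn_integral_mono) (auto split: split_indicator)
  also have "\<dots> = ennreal (erlang_CDF k l y)"
    using nn_integral_erlang_density[OF l] by simp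
  finally show ?thesis using l erlang_CDF_nonneg[OF l, of k y] erlang_CDF_nonneg[OF l, of k x] by (simp add: ennreal_le_iff2) linarith
qed

lemma g_repr:
  assumes l: "0 < l"
  shows "ennreal (\<Sum>k<K. erlang_CDF k l y) = (\<integral>\<^sup>+ x. ennreal (\<Sum>k<K. erlang_density k l x) * indicator {..y} x \<partial>lborel)"
proof -
  have "ennreal (\<Sum>k<K. erlang_CDF k l y) = (\<Sum>k<K. ennreal (erlang_CDF k l y))"
    using l by (intro sum_ennreal[symmetric]) auto
  also have "\<dots> = (\<Sum>k<K. \<integral>\<^sup>+ x. ennreal (erlang_density k l x) * indicator {..y} x \<partial>lborel)"
    using nn_integral_erlang_density[OF l] by simp
  also have "\<dots> = (\<integral>\<^sup>+ x. (\<Sum>k<K. ennreal (erlang_density k l x) * indicator {..y} x) \<partial>lborel)"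
    by (rule nn_integral_sum[symmetric]) auto
  also have "\<dots> = (\<integral>\<^sup>+ x. ennreal (\<Sum>k<K. erlang_density k l x) * indicator {..y} x \<partial>lborel)"
    using l by (intro nn_integral_cong) (simp add: sum_distrib_right[symmetric])
  finally show ?thesis .
qed

lemma g_upper:
  assumes l: "0 < l"
  shows "ennreal (\<Sum>k<K. erlang_CDF k l y) \<le> ennreal (l * y)"
proof (cases "K = 0 \<or> y < 0")
  case True
  then show ?thesis
  proof
    assume "y < 0" then show ?thesis by (simp add: erlang_CDF_def)
  qed simp
next
  case False
  then have K: "1 \<le> K" and y: "0 \<le> y" by auto
  have "ennreal (\<Sum>k<K. erlang_CDF k l y) = (\<integral>\<^sup>+ x. ennreal (\<Sum>k<K. erlang_density k l x) * indicator {..y} x \<partial>lborel)"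
    by (rule g_repr[OF l])
  also have "\<dots> \<le> (\<integral>\<^sup>+ x. ennreal l * indicator {0..y} x \<partial>lborel)"
  proof (intro nn_integral_mono)
    fix x :: real
    show "ennreal (\<Sum>k<K. erlang_density k l x) * indicator {..y} x \<le> ennreal l * indicator {0..y} x"
    proof (cases "x < 0")
      case True then show ?thesis by (simp add: erlang_density_def)
    next
      case False
      then have "(\<Sum>k<K. erlang_density k l x) = l * (1 - erlang_CDF (K - 1) l x)"
        using K by (intro erlang_density_sum) auto
      also have "\<dots> \<le> l" using l erlang_CDF_nonneg[OF l, of "K - 1" x] by (simp add: mult_le_cancel_left1)
      finally show ?thesis using False by (auto split: split_indicator intro: ennreal_leI)
    qed
  qed
  also have "\<dots> = ennreal (l * y)"
    using y l by (simp add: nn_integral_cmult_indicator ennreal_mult)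
  finally show ?thesis .
qed

lemma g_lower:
  assumes l: "0 < l" and K: "1 \<le> K" and yt: "y \<le> t"
  shows "ennreal (l * (1 - erlang_CDF (K - 1) l t) * y) \<le> ennreal (\<Sum>k<K. erlang_CDF k l y)"
proof (cases "y < 0")
  case True
  have "l * (1 - erlang_CDF (K - 1) l t) * y \<le> 0"
    using True l erlang_CDF_le1[OF l, of "K - 1" t]
    by (intro mult_nonneg_nonpos) auto
  then show ?thesis by (simp add: ennreal_eq_0_iff ennreal_neg)
next
  case False
  then have y: "0 \<le> y" by simp
  have "ennreal (l * (1 - erlang_CDF (K - 1) l t) * y) = (\<integral>\<^sup>+ x. ennreal (l * (1 - erlang_CDF (K - 1) l t)) * indicator {0..y} x \<partial>lborel)"
    using y l erlang_CDF_le1[OF l, of "K - 1" t]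
    by (simp add: nn_integral_cmult_indicator ennreal_mult)
  also have "\<dots> \<le> (\<integral>\<^sup>+ x. ennreal (\<Sum>k<K. erlang_density k l x) * indicator {..y} x \<partial>lborel)"
  proof (intro nn_integral_mono)
    fix x :: real
    show "ennreal (l * (1 - erlang_CDF (K - 1) l t)) * indicator {0..y} x \<le> ennreal (\<Sum>k<K. erlang_density k l x) * indicator {..y} x"
    proof (cases "0 \<le> x \<and> x \<le> y")
      case True
      then have "(\<Sum>k<K. erlang_density k l x) = l * (1 - erlang_CDF (K - 1) l x)"
        using K by (intro erlang_density_sum) auto
      moreover have "erlang_CDF (K - 1) l x \<le> erlang_CDF (K - 1) l t"
        using True yt l by (intro erlang_CDF_mono) auto
      ultimately have "l * (1 - erlang_CDF (K - 1) l t) \<le> (\<Sum>k<K. erlang_density k l x)"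
        using l by (simp add: mult_left_mono)
      then show ?thesis using True by (auto split: split_indicator intro: ennreal_leI)
    qed auto
  qed
  also have "\<dots> = ennreal (\<Sum>k<K. erlang_CDF k l y)"
    by (rule g_repr[OF l, symmetric])
  finally show ?thesis .
qed




lemma (in prob_space) m_value:
  assumes c: "0 < c" and Hm[measurable]: "Hh \<in> borel_measurable M"
    and Hd: "\<And>x. 0 \<le> x \<Longrightarrow> measure M {\<omega>\<in>space M. Hh \<omega> > x} = 1 / (1 + c * x)"
    and t: "0 \<le> t"
  shows "(\<integral>\<^sup>+\<omega>. ennreal (Hh \<omega>) * indicator {..t} (Hh \<omega>) \<partial>M) = ennreal (ln (1 + c * t) / c - t / (1 + c * t))"
proof -
  define f where "f x \<omega> = (if 0 \<le> x \<and> x < Hh \<omega> \<and> Hh \<omega> \<le> t then 1 else 0 :: ennreal)" for x \<omega>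
  interpret pair_sigma_finite lborel M ..
  have fm: "case_prod f \<in> borel_measurable (lborel \<Otimes>\<^sub>M M)"
    unfolding f_def by measurable
  have inner: "(\<integral>\<^sup>+x. f x \<omega> \<partial>lborel) = ennreal (Hh \<omega>) * indicator {..t} (Hh \<omega>)" for \<omega>
  proof (cases "0 \<le> Hh \<omega> \<and> Hh \<omega> \<le> t")
    case True
    have "(\<integral>\<^sup>+x. f x \<omega> \<partial>lborel) = (\<integral>\<^sup>+x. indicator {0..<Hh \<omega>} x \<partial>lborel)"
      using True by (intro nn_integral_cong) (auto simp: f_def split: split_indicator)
    then show ?thesis using True by simp
  next
    case False
    have "f x \<omega> = 0" for x
      using False unfolding f_def by (cases "0 \<le> x \<and> x < Hh \<omega> \<and> Hh \<omega> \<le> t"; simp; linarith)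
    then have "(\<integral>\<^sup>+x. f x \<omega> \<partial>lborel) = (\<integral>\<^sup>+x. 0 \<partial>lborel)"
      by simp
    then show ?thesis using False by (auto split: split_indicator simp: ennreal_neg)
  qed
  have inner2: "(\<integral>\<^sup>+\<omega>. f x \<omega> \<partial>M) = ennreal (1 / (1 + c * x) - 1 / (1 + c * t)) * indicator {0..t} x" for x
  proof (cases "0 \<le> x \<and> x \<le> t")
    case True
    have "(\<integral>\<^sup>+\<omega>. f x \<omega> \<partial>M) = (\<integral>\<^sup>+\<omega>. indicator ({\<omega>\<in>space M. Hh \<omega> > x} - {\<omega>\<in>space M. Hh \<omega> > t}) \<omega> \<partial>M)"
      using True by (intro nn_integral_cong) (auto simp: f_def split: split_indicator)
    also have "\<dots> = emeasure M ({\<omega>\<in>space M. Hh \<omega> > x} - {\<omega>\<in>space M. Hh \<omega> > t})"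
      by (intro nn_integral_indicator) measurable
    also have "\<dots> = ennreal (measure M ({\<omega>\<in>space M. Hh \<omega> > x} - {\<omega>\<in>space M. Hh \<omega> > t}))"
      by (simp add: emeasure_eq_measure)
    also have "measure M ({\<omega>\<in>space M. Hh \<omega> > x} - {\<omega>\<in>space M. Hh \<omega> > t}) = 1 / (1 + c * x) - 1 / (1 + c * t)"
      using True Hd[of x] Hd[of t] by (subst finite_measure_Diff) auto
    finally show ?thesis using True by simp
  next
    case False
    then have "(\<integral>\<^sup>+\<omega>. f x \<omega> \<partial>M) = (\<integral>\<^sup>+\<omega>. 0 \<partial>M)"
      by (intro nn_integral_cong) (auto simp: f_def)
    then show ?thesis using False by auto
  qed
  have "(\<integral>\<^sup>+\<omega>. ennreal (Hh \<omega>) * indicator {..t} (Hh \<omega>) \<partial>M) = (\<integral>\<^sup>+\<omega>. (\<integral>\<^sup>+x. f x \<omega> \<partial>lborel) \<partial>M)"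
    by (simp add: inner)
  also have "\<dots> = (\<integral>\<^sup>+x. (\<integral>\<^sup>+\<omega>. f x \<omega> \<partial>M) \<partial>lborel)"
    by (rule Fubini'[OF fm])
  also have "\<dots> = (\<integral>\<^sup>+x. ennreal (1 / (1 + c * x) - 1 / (1 + c * t)) * indicator {0..t} x \<partial>lborel)"
    by (simp add: inner2)
  also have "\<dots> = ennreal ((ln (1 + c * t) / c - t / (1 + c * t)) - (ln (1 + c * 0) / c - 0 / (1 + c * t)))"
  proof (rule nn_integral_FTC_Icc)
    show "(\<lambda>x. 1 / (1 + c * x) - 1 / (1 + c * t)) \<in> borel_measurable borel" by measurable
    fix x assume x: "x \<in> {0..t}"
    then have pos: "0 < 1 + c * x" using c by (simp add: add_pos_nonneg)
    show "((\<lambda>x. ln (1 + c * x) / c - x / (1 + c * t)) has_real_derivative 1 / (1 + c * x) - 1 / (1 + c * t)) (at x)"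
    proof -
      have pt: "0 < 1 + c * t" using c t by (simp add: add_pos_nonneg)
      have "((\<lambda>x. ln (1 + c * x) / c - x / (1 + c * t)) has_real_derivative (c / (1 + c * x)) / c - 1 / (1 + c * t)) (at x)"
        using pos pt by (auto intro!: derivative_eq_intros)
      then show ?thesis using c by simp
    qed
    have "1 + c * x \<le> 1 + c * t" using x c by (simp add: mult_left_mono)
    then show "0 \<le> 1 / (1 + c * x) - 1 / (1 + c * t)"
      using pos by (simp add: frac_le)
  qed (use t in auto)
  finally show ?thesis by simp
qed




lemma (in prob_space) erlang_small:
  assumes th: "0 < \<theta>" and X: "distributed M lborel X (erlang_density k \<theta>)"
    and kt: "2 * \<theta> * t \<le> real k + 1"
  shows "prob {\<omega>\<in>space M. X \<omega> \<le> t} \<le> 4 / (real k + 1)"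
proof -
  have Xm[measurable]: "X \<in> borel_measurable M"
    using distributed_measurable[OF X] by simp
  define \<mu> where "\<mu> = (real k + 1) / \<theta>"
  have mu: "expectation X = \<mu>"
    using erlang_ith_moment[OF th X, of 1] by (simp add: \<mu>_def)
  have var: "variance X = (real k + 1) / \<theta>\<^sup>2"
    using erlang_distributed_variance[OF th X] by simp
  have int2: "integrable M (\<lambda>x. X x ^ 2)"
    using erlang_ith_moment_integrable[OF th X, of 2] .
  have tmu: "t \<le> \<mu> / 2"
    using kt th by (simp add: \<mu>_def field_simps)
  have mupos: "0 < \<mu>" using th by (simp add: \<mu>_def)
  define a where "a = \<mu> - t"
  have a: "\<mu> / 2 \<le> a" "0 < a" using tmu mupos by (auto simp: a_def)
  have "prob {\<omega>\<in>space M. X \<omega> \<le> t} \<le> prob {\<omega>\<in>space M. \<bar>X \<omega> - expectation X\<bar> \<ge> a}"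
    by (intro finite_measure_mono) (auto simp: mu a_def)
  also have "\<dots> \<le> variance X / a\<^sup>2"
    by (rule Chebyshev_inequality) (use int2 a in auto)
  also have "\<dots> \<le> ((real k + 1) / \<theta>\<^sup>2) / (\<mu> / 2)\<^sup>2"
    unfolding var using a mupos th
    by (intro divide_left_mono power_mono mult_pos_pos) auto
  also have "\<dots> = 4 / (real k + 1)"
  proof -
    define r where "r = real k + 1"
    have r: "0 < r" by (simp add: r_def)
    have "(\<mu> / 2)\<^sup>2 = r\<^sup>2 / (4 * \<theta>\<^sup>2)"
      by (simp add: \<mu>_def r_def power_divide)
    then have "(r / \<theta>\<^sup>2) / (\<mu> / 2)\<^sup>2 = (r / \<theta>\<^sup>2) * (4 * \<theta>\<^sup>2) / r\<^sup>2"
      by simp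
    also have "\<dots> = 4 / r"
      using r th by (simp add: power2_eq_square)
    finally show ?thesis by (simp add: r_def)
  qed
  finally show ?thesis .
qed

lemma (in prob_space) variance_sum_indep:
  fixes X :: "'i \<Rightarrow> 'a \<Rightarrow> real"
  assumes I: "finite I" and Xm[measurable]: "\<And>i. i \<in> I \<Longrightarrow> X i \<in> borel_measurable M"
    and bnd: "\<And>i \<omega>. i \<in> I \<Longrightarrow> \<bar>X i \<omega>\<bar> \<le> B"
    and ind: "\<And>i j. i \<in> I \<Longrightarrow> j \<in> I \<Longrightarrow> i \<noteq> j \<Longrightarrow> indep_var borel (X i) borel (X j)"
  shows "variance (\<lambda>\<omega>. \<Sum>i\<in>I. X i \<omega>) = (\<Sum>i\<in>I. variance (X i))"
proof -
  define Y where "Y i \<omega> = X i \<omega> - expectation (X i)" for i \<omega>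
  have intX: "integrable M (X i)" if "i \<in> I" for i
    using that bnd by (intro integrable_const_bound[where B=B]) auto
  have Ym[measurable]: "Y i \<in> borel_measurable M" if "i \<in> I" for i
    using that unfolding Y_def by measurable
  have intY: "integrable M (Y i)" if "i \<in> I" for i
    using intX[OF that] unfolding Y_def by auto
  have EY: "expectation (Y i) = 0" if "i \<in> I" for i
    using intX[OF that] unfolding Y_def by (simp add: prob_space)
  have intYY: "integrable M (\<lambda>\<omega>. Y i \<omega> * Y j \<omega>)" if "i \<in> I" "j \<in> I" for i j
  proof (rule integrable_const_bound[where B="(B + \<bar>expectation (X i)\<bar>) * (B + \<bar>expectation (X j)\<bar>)"])
    show "AE x in M. norm (Y i x * Y j x) \<le> (B + \<bar>expectation (X i)\<bar>) * (B + \<bar>expectation (X j)\<bar>)"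
    proof (intro AE_I2)
      fix x
      have "\<bar>Y i x\<bar> \<le> B + \<bar>expectation (X i)\<bar>" "\<bar>Y j x\<bar> \<le> B + \<bar>expectation (X j)\<bar>"
        using bnd[OF that(1), of x] bnd[OF that(2), of x] unfolding Y_def by linarith+
      then show "norm (Y i x * Y j x) \<le> (B + \<bar>expectation (X i)\<bar>) * (B + \<bar>expectation (X j)\<bar>)"
        by (simp add: abs_mult mult_mono)
    qed
  qed (use that in measurable)
  have cross: "expectation (\<lambda>\<omega>. Y i \<omega> * Y j \<omega>) = 0" if "i \<in> I" "j \<in> I" "i \<noteq> j" for i j
  proof -
    have "indep_var borel ((\<lambda>x. x - expectation (X i)) \<circ> X i) borel ((\<lambda>x. x - expectation (X j)) \<circ> X j)"
      by (rule indep_var_compose[OF ind[OF that]]) auto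
    then have "indep_var borel (Y i) borel (Y j)"
      by (simp add: Y_def[abs_def] comp_def)
    then show ?thesis
      using indep_var_lebesgue_integral[of "Y i" "Y j"] intY that EY by simp
  qed
  have ES: "expectation (\<lambda>\<omega>. \<Sum>i\<in>I. X i \<omega>) = (\<Sum>i\<in>I. expectation (X i))"
    using Bochner_Integration.integral_sum[of I M X] intX by simp
  have "variance (\<lambda>\<omega>. \<Sum>i\<in>I. X i \<omega>) = expectation (\<lambda>\<omega>. (\<Sum>i\<in>I. Y i \<omega>)\<^sup>2)"
    unfolding ES Y_def by (simp add: sum_subtractf)
  also have "\<dots> = expectation (\<lambda>\<omega>. \<Sum>i\<in>I. \<Sum>j\<in>I. Y i \<omega> * Y j \<omega>)"
    by (simp add: power2_eq_square sum_product)
  also have "\<dots> = (\<Sum>i\<in>I. \<Sum>j\<in>I. expectation (\<lambda>\<omega>. Y i \<omega> * Y j \<omega>))"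
    using intYY by (simp add: integral_sum integrable_sum)
  also have "\<dots> = (\<Sum>i\<in>I. expectation (\<lambda>\<omega>. Y i \<omega> * Y i \<omega>))"
  proof (intro sum.cong refl)
    fix i assume i: "i \<in> I"
    have "(\<Sum>j\<in>I. expectation (\<lambda>\<omega>. Y i \<omega> * Y j \<omega>)) = (\<Sum>j\<in>{i}. expectation (\<lambda>\<omega>. Y i \<omega> * Y j \<omega>))"
      using i I cross by (intro sum.mono_neutral_right) auto
    then show "(\<Sum>j\<in>I. expectation (\<lambda>\<omega>. Y i \<omega> * Y j \<omega>)) = expectation (\<lambda>\<omega>. Y i \<omega> * Y i \<omega>)"
      by simp
  qed
  also have "\<dots> = (\<Sum>i\<in>I. variance (X i))"
    by (simp add: Y_def power2_eq_square)
  finally show ?thesis .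
qed




locale cpp = prob_space M for M :: "'a measure" +
  fixes c \<theta> :: real and H :: "nat \<Rightarrow> 'a \<Rightarrow> real" and E :: "nat \<Rightarrow> nat \<Rightarrow> 'a \<Rightarrow> real"
  assumes c: "c > 0" and th: "\<theta> > 0"
    and indep: "indep_vars (\<lambda>_. borel) (driving H E) driving_index"
    and H_dist: "\<And>i x. 1 \<le> i \<Longrightarrow> x \<ge> 0 \<Longrightarrow>
                    measure M {\<omega> \<in> space M. H i \<omega> > x} = 1 / (1 + c * x)"
    and E_dist: "\<And>i j. 1 \<le> j \<Longrightarrow> distributed M lborel (E i j) (exponential_density \<theta>)"
begin

lemma Hm[measurable]: "1 \<le> i \<Longrightarrow> H i \<in> borel_measurable M"
proof -
  assume i: "1 \<le> i"
  have "Inl i \<in> driving_index" using i by (simp add: driving_index_def)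
  then have "random_variable borel (driving H E (Inl i))"
    using indep unfolding indep_vars_def by blast
  then show ?thesis by (simp add: driving_def)
qed

lemma Em[measurable]: "1 \<le> j \<Longrightarrow> E i j \<in> borel_measurable M"
  using distributed_measurable[OF E_dist] by simp

lemma atom_m[measurable]: "atom E i k \<in> borel_measurable M"
  unfolding atom_def[abs_def] by measurable

lemma atom_dist: "1 \<le> k \<Longrightarrow> distributed M lborel (atom E i k) (erlang_density (k - 1) \<theta>)"
  by (rule atom_erlang[OF indep th E_dist])

lemma E_nonneg: "AE \<omega> in M. \<forall>i j. 1 \<le> j \<longrightarrow> 0 \<le> E i j \<omega>"
proof -
  have "AE \<omega> in M. 0 \<le> E i j \<omega>" if j: "1 \<le> j" for i j
  proof (rule AE_distrD[of "E i j" M lborel])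
    show "E i j \<in> measurable M lborel" using Em[OF j] by simp
    have "AE x in density lborel (exponential_density \<theta>). 0 \<le> x"
      by (subst AE_density) (auto simp: erlang_density_def)
    then show "AE x in distr M lborel (E i j). 0 \<le> x"
      unfolding distributed_distr_eq_density[OF E_dist[of j i, OF j]] .
  qed
  then have "AE \<omega> in M. \<forall>i. \<forall>j. 1 \<le> j \<longrightarrow> 0 \<le> E i j \<omega>"
    by (auto simp: AE_all_countable)
  then show ?thesis by simp
qed

lemma indep_H_atom:
  assumes i: "1 \<le> i"
  shows "indep_var borel (H i) borel (atom E i k)"
proof -
  have "indep_var borel (\<lambda>\<omega>. (\<lambda>x. x (Inl i)) (restrict (\<lambda>q. driving H E q \<omega>) {Inl i}))
      borel (\<lambda>\<omega>. (\<lambda>x. \<Sum>j\<in>{1..k}. x (Inr (i, j))) (restrict (\<lambda>q. driving H E q \<omega>) (Inr ` ({i} \<times> {1..k}))))"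
    by (rule indep_pair[OF indep]) (use i in \<open>auto simp: driving_index_def\<close>)
  then show ?thesis
    by (simp add: driving_def atom_def[abs_def])
qed

definition Y :: "nat \<Rightarrow> real \<Rightarrow> nat \<Rightarrow> 'a \<Rightarrow> real" where
  "Y K t i \<omega> = (\<Sum>k\<in>{1..K}. if atom E i k \<omega> < H i \<omega> \<and> H i \<omega> \<le> t then 1 else 0)"

definition Yf :: "nat \<Rightarrow> real \<Rightarrow> nat \<Rightarrow> (nat + nat \<times> nat \<Rightarrow> real) \<Rightarrow> real" where
  "Yf K t i x = (\<Sum>k\<in>{1..K}. if (\<Sum>j\<in>{1..k}. x (Inr (i, j))) < x (Inl i) \<and> x (Inl i) \<le> t then 1 else 0)"

definition blk :: "nat \<Rightarrow> nat \<Rightarrow> (nat + nat \<times> nat) set" where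
  "blk K i = insert (Inl i) (Inr ` ({i} \<times> {1..K}))"

lemma Yf_m: "Yf K t i \<in> borel_measurable (PiM (blk K i) (\<lambda>_. borel))"
  unfolding Yf_def[abs_def] blk_def by measurable

lemma Y_eq: "Y K t i = (\<lambda>\<omega>. Yf K t i (restrict (\<lambda>q. driving H E q \<omega>) (blk K i)))"
  by (auto simp: Y_def Yf_def blk_def driving_def atom_def intro!: ext sum.cong)

lemma Y_m[measurable]: "1 \<le> i \<Longrightarrow> Y K t i \<in> borel_measurable M"
  unfolding Y_def by measurable

lemma indep_Y:
  assumes "1 \<le> i" "1 \<le> l" "i \<noteq> l"
  shows "indep_var borel (Y K t i) borel (Y K t l)"
  unfolding Y_eq
  by (rule indep_pair[OF indep _ _ _ Yf_m Yf_m]) (use assms in \<open>auto simp: blk_def driving_index_def\<close>)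

lemma Y_bnd: "0 \<le> Y K t i \<omega>" "Y K t i \<omega> \<le> real K"
proof -
  show "0 \<le> Y K t i \<omega>" unfolding Y_def by (intro sum_nonneg) auto
  have "Y K t i \<omega> \<le> (\<Sum>k\<in>{1..K}. 1)" unfolding Y_def by (intro sum_mono) auto
  then show "Y K t i \<omega> \<le> real K" by simp
qed

end



lemma m_nonneg: fixes c t :: real assumes c: "0 < c" and t: "0 \<le> t" shows "0 \<le> ln (1 + c * t) / c - t / (1 + c * t)"
proof -
  have "0 \<le> c * t" using c t by simp
  then have p: "0 < 1 + c * t" by linarith
  have "ln (1 / (1 + c * t)) \<le> 1 / (1 + c * t) - 1" using p by (intro ln_le_minus_one) simp
  then have "1 - 1 / (1 + c * t) \<le> ln (1 + c * t)" using p by (simp add: ln_div)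
  moreover have "1 - 1 / (1 + c * t) = c * (t / (1 + c * t))" using p by (simp add: field_simps)
  ultimately have "c * (t / (1 + c * t)) \<le> ln (1 + c * t)" by simp
  then show ?thesis using c by (simp add: field_simps)
qed

context cpp begin

lemma EY_bounds:
  assumes i: "1 \<le> i" and K: "1 \<le> K" and t: "0 \<le> t"
  defines "\<rho> \<equiv> erlang_CDF (K - 1) \<theta> t" and "m \<equiv> ln (1 + c * t) / c - t / (1 + c * t)"
  shows "\<theta> * (1 - \<rho>) * m \<le> expectation (Y K t i)" "expectation (Y K t i) \<le> \<theta> * m"
proof -
  have m0: "0 \<le> m" unfolding m_def using c t by (rule m_nonneg)
  have rho: "0 \<le> \<rho>" "\<rho> \<le> 1" unfolding \<rho>_def using th by (auto intro: erlang_CDF_le1)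
  have mv: "(\<integral>\<^sup>+\<omega>. ennreal (H i \<omega>) * indicator {..t} (H i \<omega>) \<partial>M) = ennreal m"
    unfolding m_def by (rule m_value[OF c Hm[OF i] H_dist[OF i] t])
  have ev: "{\<omega>\<in>space M. atom E i k \<omega> < H i \<omega> \<and> H i \<omega> \<le> t} \<in> sets M" for k
    using i by measurable
  have "(\<integral>\<^sup>+\<omega>. ennreal (Y K t i \<omega>) \<partial>M) = (\<integral>\<^sup>+\<omega>. (\<Sum>k\<in>{1..K}. indicator {\<omega>\<in>space M. atom E i k \<omega> < H i \<omega> \<and> H i \<omega> \<le> t} \<omega>) \<partial>M)"
  proof (intro nn_integral_cong)
    fix \<omega> assume \<omega>: "\<omega> \<in> space M"
    have "ennreal (Y K t i \<omega>) = (\<Sum>k\<in>{1..K}. ennreal (if atom E i k \<omega> < H i \<omega> \<and> H i \<omega> \<le> t then 1 else 0))"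
      unfolding Y_def by (rule sum_ennreal[symmetric]) simp
    also have "\<dots> = (\<Sum>k\<in>{1..K}. indicator {\<omega>\<in>space M. atom E i k \<omega> < H i \<omega> \<and> H i \<omega> \<le> t} \<omega>)"
      using \<omega> by (intro sum.cong refl) (simp add: indicator_def)
    finally show "ennreal (Y K t i \<omega>) = (\<Sum>k\<in>{1..K}. indicator {\<omega>\<in>space M. atom E i k \<omega> < H i \<omega> \<and> H i \<omega> \<le> t} \<omega>)" .
  qed
  also have "\<dots> = (\<Sum>k\<in>{1..K}. emeasure M {\<omega>\<in>space M. atom E i k \<omega> < H i \<omega> \<and> H i \<omega> \<le> t})"
    using ev by (subst nn_integral_sum) auto
  also have "\<dots> = (\<Sum>k\<in>{1..K}. \<integral>\<^sup>+\<omega>. ennreal (erlang_CDF (k - 1) \<theta> (H i \<omega>)) * indicator {..t} (H i \<omega>) \<partial>M)"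
    by (intro sum.cong refl key[OF indep_H_atom[OF i] atom_dist th]) auto
  also have "\<dots> = (\<integral>\<^sup>+\<omega>. (\<Sum>k\<in>{1..K}. ennreal (erlang_CDF (k - 1) \<theta> (H i \<omega>)) * indicator {..t} (H i \<omega>)) \<partial>M)"
    using i by (subst nn_integral_sum) auto
  also have "\<dots> = (\<integral>\<^sup>+\<omega>. ennreal (\<Sum>k<K. erlang_CDF k \<theta> (H i \<omega>)) * indicator {..t} (H i \<omega>) \<partial>M)"
  proof (intro nn_integral_cong)
    fix \<omega>
    have "(\<Sum>k\<in>{1..K}. ennreal (erlang_CDF (k - 1) \<theta> (H i \<omega>)) * indicator {..t} (H i \<omega>))
       = (\<Sum>k<K. ennreal (erlang_CDF k \<theta> (H i \<omega>)) * indicator {..t} (H i \<omega>))"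
      using sum.atLeast1_atMost_eq[of "\<lambda>k. ennreal (erlang_CDF (k - 1) \<theta> (H i \<omega>)) * indicator {..t} (H i \<omega>)" K]
      by simp
    also have "\<dots> = ennreal (\<Sum>k<K. erlang_CDF k \<theta> (H i \<omega>)) * indicator {..t} (H i \<omega>)"
      using th by (simp add: sum_distrib_right[symmetric])
    finally show "(\<Sum>k\<in>{1..K}. ennreal (erlang_CDF (k - 1) \<theta> (H i \<omega>)) * indicator {..t} (H i \<omega>))
       = ennreal (\<Sum>k<K. erlang_CDF k \<theta> (H i \<omega>)) * indicator {..t} (H i \<omega>)" .
  qed
  finally have nnY: "(\<integral>\<^sup>+\<omega>. ennreal (Y K t i \<omega>) \<partial>M) = (\<integral>\<^sup>+\<omega>. ennreal (\<Sum>k<K. erlang_CDF k \<theta> (H i \<omega>)) * indicator {..t} (H i \<omega>) \<partial>M)" .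
  have intY: "integrable M (Y K t i)"
    using Y_bnd i by (intro integrable_const_bound[where B="real K"]) auto
  have EYeq: "(\<integral>\<^sup>+\<omega>. ennreal (Y K t i \<omega>) \<partial>M) = ennreal (expectation (Y K t i))"
    using intY Y_bnd by (intro nn_integral_eq_integral) auto
  have EY0: "0 \<le> expectation (Y K t i)"
    using Y_bnd by (intro integral_nonneg_AE) auto
  have "ennreal (expectation (Y K t i)) \<le> (\<integral>\<^sup>+\<omega>. ennreal \<theta> * (ennreal (H i \<omega>) * indicator {..t} (H i \<omega>)) \<partial>M)"
    unfolding EYeq[symmetric] nnY
  proof (intro nn_integral_mono)
    fix \<omega>
    have "ennreal (\<Sum>k<K. erlang_CDF k \<theta> (H i \<omega>)) \<le> ennreal (\<theta> * H i \<omega>)"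
      by (rule g_upper[OF th])
    also have "\<dots> = ennreal \<theta> * ennreal (H i \<omega>)" using th by (simp add: ennreal_mult')
    finally show "ennreal (\<Sum>k<K. erlang_CDF k \<theta> (H i \<omega>)) * indicator {..t} (H i \<omega>) \<le> ennreal \<theta> * (ennreal (H i \<omega>) * indicator {..t} (H i \<omega>))"
      by (auto split: split_indicator)
  qed
  also have "\<dots> = ennreal (\<theta> * m)"
    using th i by (subst nn_integral_cmult) (auto simp: mv ennreal_mult')
  finally show "expectation (Y K t i) \<le> \<theta> * m"
    using th m0 by (simp add: ennreal_le_iff)
  have "ennreal (\<theta> * (1 - \<rho>) * m) = (\<integral>\<^sup>+\<omega>. ennreal (\<theta> * (1 - \<rho>)) * (ennreal (H i \<omega>) * indicator {..t} (H i \<omega>)) \<partial>M)"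
    using th i rho by (subst nn_integral_cmult) (auto simp: mv ennreal_mult')
  also have "\<dots> \<le> ennreal (expectation (Y K t i))"
    unfolding EYeq[symmetric] nnY
  proof (intro nn_integral_mono)
    fix \<omega>
    show "ennreal (\<theta> * (1 - \<rho>)) * (ennreal (H i \<omega>) * indicator {..t} (H i \<omega>)) \<le> ennreal (\<Sum>k<K. erlang_CDF k \<theta> (H i \<omega>)) * indicator {..t} (H i \<omega>)"
    proof (cases "H i \<omega> \<le> t")
      case True
      have "ennreal (\<theta> * (1 - \<rho>)) * ennreal (H i \<omega>) = ennreal (\<theta> * (1 - \<rho>) * H i \<omega>)"
      proof (cases "H i \<omega> < 0")
        case True then show ?thesis using th rho by (simp add: ennreal_neg mult_nonneg_nonpos)
      next
        case False then show ?thesis using th rho by (simp add: ennreal_mult)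
      qed
      also have "\<dots> \<le> ennreal (\<Sum>k<K. erlang_CDF k \<theta> (H i \<omega>))"
        unfolding \<rho>_def by (rule g_lower[OF th K True])
      finally show ?thesis using True by simp
    qed simp
  qed
  finally show "\<theta> * (1 - \<rho>) * m \<le> expectation (Y K t i)"
    using EY0 by (simp add: ennreal_le_iff)
qed

end



context cpp begin

lemma atom_mono:
  assumes nn: "\<forall>i j. 1 \<le> j \<longrightarrow> 0 \<le> E i j \<omega>" and jj: "j \<le> j'"
  shows "atom E i j \<omega> \<le> atom E i j' \<omega>"
  unfolding atom_def using jj nn by (intro sum_mono2) auto

lemma good_event:
  assumes n: "2 \<le> n" and t: "0 \<le> t"
    and nn: "\<forall>i j. 1 \<le> j \<longrightarrow> 0 \<le> E i j \<omega>"
    and Ht: "\<forall>i\<in>{1..n-1}. H i \<omega> \<le> t"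
    and At: "\<forall>i\<in>{0..n-1}. t < atom E i (K + 1) \<omega>"
  shows "(\<Sum>i\<in>{1..n-1}. Y K t i \<omega>) \<le> real (S H E n \<omega>)"
    "real (S H E n \<omega>) \<le> (\<Sum>i\<in>{1..n-1}. Y K t i \<omega>) + real K"
proof -
  define row where "row i = {j. 1 \<le> j \<and> atom E i j \<omega> < H i \<omega>}" for i
  have big: "t < atom E i j \<omega>" if "i \<in> {0..n-1}" "K + 1 \<le> j" for i j
    using At that atom_mono[OF nn that(2), of i] by fastforce
  have row_eq: "row i = {j\<in>{1..K}. atom E i j \<omega> < H i \<omega>}" if i: "i \<in> {1..n-1}" for i
  proof -
    have "j \<le> K" if "1 \<le> j" "atom E i j \<omega> < H i \<omega>" for j
    proof (rule ccontr)
      assume "\<not> j \<le> K"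
      then have "t < atom E i j \<omega>" using big[of i j] i by auto
      then show False using that Ht i by fastforce
    qed
    then show ?thesis unfolding row_def by auto
  qed
  have card_row: "real (card (row i)) = Y K t i \<omega>" if i: "i \<in> {1..n-1}" for i
  proof -
    have "real (card (row i)) = (\<Sum>j\<in>{j\<in>{1..K}. atom E i j \<omega> < H i \<omega>}. 1)"
      unfolding row_eq[OF i] by simp
    also have "\<dots> = (\<Sum>j\<in>{1..K}. if atom E i j \<omega> < H i \<omega> then 1 else 0)"
      by (rule sum.inter_filter) simp
    also have "\<dots> = Y K t i \<omega>"
      unfolding Y_def using Ht i by (intro sum.cong) auto
    finally show ?thesis .
  qed
  have set1: "{(i, j). 1 \<le> i \<and> i \<le> n - 1 \<and> 1 \<le> j \<and> atom E i j \<omega> < H i \<omega>} = Sigma {1..n-1} row"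
    by (auto simp: row_def)
  have fin_row: "finite (row i)" if "i \<in> {1..n-1}" for i
    using row_eq[OF that] by simp
  have c1: "real (card {(i, j). 1 \<le> i \<and> i \<le> n - 1 \<and> 1 \<le> j \<and> atom E i j \<omega> < H i \<omega>}) = (\<Sum>i\<in>{1..n-1}. Y K t i \<omega>)"
    unfolding set1 using fin_row by (simp add: card_SigmaI card_row)
  have mx: "maxH H n \<omega> \<le> t"
  proof -
    have "Max ((\<lambda>k. H k \<omega>) ` {1..<n}) \<le> t"
      using Ht n by (subst Max_le_iff) auto
    then show ?thesis using n by (simp add: maxH_def)
  qed
  have jK: "j \<le> K" if j: "1 \<le> j" "atom E 0 j \<omega> < maxH H n \<omega>" for j
    proof (rule ccontr)
      assume "\<not> j \<le> K"
      then have "t < atom E 0 j \<omega>" using big[of 0 j] by auto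
      then show False using j mx by linarith
    qed
  have set2: "{j. 1 \<le> j \<and> atom E 0 j \<omega> < maxH H n \<omega>} \<subseteq> {1..K}"
    using jK by auto
  have c2: "card {j. 1 \<le> j \<and> atom E 0 j \<omega> < maxH H n \<omega>} \<le> K"
    using card_mono[OF _ set2] by simp
  have S_eq: "real (S H E n \<omega>) = (\<Sum>i\<in>{1..n-1}. Y K t i \<omega>) + real (card {j. 1 \<le> j \<and> atom E 0 j \<omega> < maxH H n \<omega>})"
    unfolding S_def using c1 by simp
  show "(\<Sum>i\<in>{1..n-1}. Y K t i \<omega>) \<le> real (S H E n \<omega>)"
    unfolding S_eq by simp
  show "real (S H E n \<omega>) \<le> (\<Sum>i\<in>{1..n-1}. Y K t i \<omega>) + real K"
    unfolding S_eq using c2 by simp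
qed

end



context cpp begin

lemma var_Y:
  assumes i: "1 \<le> i"
  shows "variance (Y K t i) \<le> real K * expectation (Y K t i)"
proof -
  have intY: "integrable M (Y K t i)"
    using Y_bnd i by (intro integrable_const_bound[where B="real K"]) auto
  have intY2: "integrable M (\<lambda>x. (Y K t i x)\<^sup>2)"
    using Y_bnd i by (intro integrable_const_bound[where B="real K ^ 2"]) (auto simp: abs_square_le_1 power_mono)
  have "variance (Y K t i) = expectation (\<lambda>x. (Y K t i x)\<^sup>2) - (expectation (Y K t i))\<^sup>2"
    by (rule variance_eq[OF intY intY2])
  also have "\<dots> \<le> expectation (\<lambda>x. (Y K t i x)\<^sup>2)" by simp
  also have "\<dots> \<le> expectation (\<lambda>x. real K * Y K t i x)"
  proof (rule integral_mono)
    show "integrable M (\<lambda>x. real K * Y K t i x)" using intY by simp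
    fix x
    have "(Y K t i x)\<^sup>2 = Y K t i x * Y K t i x" by (simp add: power2_eq_square)
    also have "\<dots> \<le> real K * Y K t i x" using Y_bnd[of K t i x] by (intro mult_right_mono) auto
    finally show "(Y K t i x)\<^sup>2 \<le> real K * Y K t i x" .
  qed (use intY2 in auto)
  also have "\<dots> = real K * expectation (Y K t i)" by simp
  finally show ?thesis .
qed

lemma prob_bound:
  fixes n :: nat and s \<epsilon> :: real
  assumes n: "2 \<le> n" and s: "0 < s" and e: "0 < \<epsilon>"
  defines "t \<equiv> real n * s" and "L \<equiv> real n * ln (real n)"
  defines "m \<equiv> ln (1 + c * t) / c - t / (1 + c * t)"
  assumes C1: "real (n - 1) * \<theta> * m / L \<le> \<theta> / c + \<epsilon> / 2"
    and C2: "\<theta> / c - \<epsilon> / 2 \<le> real (n - 1) * \<theta> * (1 - 2 / (\<theta> * t)) * m / L"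
    and C3: "2 * \<theta> * t + 1 \<le> \<epsilon> * L / 4"
  shows "measure M {\<omega>\<in>space M. \<bar>real (S H E n \<omega>) / L - \<theta> / c\<bar> > \<epsilon>}
     \<le> 1 / (c * s) + 2 / (\<theta> * s) + real (n - 1) * (2 * \<theta> * t + 1) * \<theta> * m / (\<epsilon> * L / 4)\<^sup>2"
proof -
  define K where "K = nat \<lceil>2 * \<theta> * t\<rceil>"
  have t0: "0 < t" using n s by (simp add: t_def)
  have L0: "0 < L" using n by (simp add: L_def)
  have m0: "0 \<le> m" unfolding m_def using c t0 by (intro m_nonneg) auto
  have Kge: "2 * \<theta> * t \<le> real K" unfolding K_def by linarith
  have Kle: "real K \<le> 2 * \<theta> * t + 1"
  proof -
    have "0 \<le> 2 * \<theta> * t" using th t0 by simp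
    then have "real K = of_int \<lceil>2 * \<theta> * t\<rceil>" unfolding K_def by simp
    also have "\<dots> \<le> 2 * \<theta> * t + 1" using ceiling_correct[of "2 * \<theta> * t"] by linarith
    finally show ?thesis .
  qed
  have K1: "1 \<le> K"
  proof -
    have "0 < 2 * \<theta> * t" using th t0 by simp
    then have "1 \<le> \<lceil>2 * \<theta> * t\<rceil>" by simp
    then show ?thesis unfolding K_def by (simp add: le_nat_iff)
  qed
  define \<rho> where "\<rho> = erlang_CDF (K - 1) \<theta> t"
  have rho: "\<rho> \<le> 2 / (\<theta> * t)"
  proof -
    have "\<rho> = prob {\<omega>\<in>space M. atom E 1 K \<omega> \<le> t}"
      unfolding \<rho>_def using erlang_distributed_le[OF atom_dist[OF K1] th] t0 by simp
    also have "\<dots> \<le> 4 / (real (K - 1) + 1)"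
      by (rule erlang_small[OF th atom_dist[OF K1]]) (use K1 Kge in auto)
    also have "\<dots> = 4 / real K" using K1 by (simp add: of_nat_diff)
    also have "\<dots> \<le> 4 / (2 * \<theta> * t)"
      using Kge th t0 K1 by (intro divide_left_mono) (auto intro!: mult_pos_pos)
    finally show ?thesis by simp
  qed
  define Z where "Z \<omega> = (\<Sum>i\<in>{1..n-1}. Y K t i \<omega>)" for \<omega>
  define \<mu> where "\<mu> = (\<Sum>i\<in>{1..n-1}. expectation (Y K t i))"
  have intY: "integrable M (Y K t i)" if "1 \<le> i" for i
    using Y_bnd that by (intro integrable_const_bound[where B="real K"]) auto
  have Zm[measurable]: "Z \<in> borel_measurable M"
    unfolding Z_def[abs_def] by (intro borel_measurable_sum) auto
  have EZ: "expectation Z = \<mu>"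
    unfolding Z_def[abs_def] \<mu>_def
    using Bochner_Integration.integral_sum[of "{1..n-1}" M "\<lambda>i. Y K t i"] intY by simp
  have mu_up: "\<mu> \<le> real (n - 1) * (\<theta> * m)"
  proof -
    have "\<mu> \<le> (\<Sum>i\<in>{1..n-1}. \<theta> * m)"
      unfolding \<mu>_def using EY_bounds(2)[OF _ K1 less_imp_le[OF t0]] by (intro sum_mono) (auto simp: m_def)
    then show ?thesis by simp
  qed
  have mu_lo: "real (n - 1) * (\<theta> * (1 - 2 / (\<theta> * t)) * m) \<le> \<mu>"
  proof -
    have "\<theta> * (1 - 2 / (\<theta> * t)) * m \<le> \<theta> * (1 - \<rho>) * m"
      using rho th m0 by (intro mult_right_mono mult_left_mono) auto
    then have "(\<Sum>i\<in>{1..n-1}. \<theta> * (1 - 2 / (\<theta> * t)) * m) \<le> \<mu>"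
      unfolding \<mu>_def using EY_bounds(1)[OF _ K1 less_imp_le[OF t0]]
      by (intro sum_mono) (auto simp: m_def \<rho>_def intro: order_trans)
    then show ?thesis by simp
  qed
  have varZ: "variance Z \<le> real (n - 1) * (2 * \<theta> * t + 1) * \<theta> * m"
  proof -
    have "variance Z = (\<Sum>i\<in>{1..n-1}. variance (Y K t i))"
      unfolding Z_def[abs_def]
    proof (rule variance_sum_indep)
      show "\<bar>Y K t i \<omega>\<bar> \<le> real K" for i \<omega> using Y_bnd[of K t i \<omega>] by simp
    qed (auto intro: indep_Y)
    also have "\<dots> \<le> (\<Sum>i\<in>{1..n-1}. (2 * \<theta> * t + 1) * (\<theta> * m))"
    proof (rule sum_mono)
      fix i assume i: "i \<in> {1..n-1}"
      have e0: "0 \<le> expectation (Y K t i)" using Y_bnd by (intro integral_nonneg_AE) auto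
      have "variance (Y K t i) \<le> real K * expectation (Y K t i)" using i by (intro var_Y) auto
      also have "\<dots> \<le> (2 * \<theta> * t + 1) * (\<theta> * m)"
        using Kle e0 EY_bounds(2)[OF _ K1 less_imp_le[OF t0], of i] i th t0
        by (intro mult_mono) (auto simp: m_def)
      finally show "variance (Y K t i) \<le> (2 * \<theta> * t + 1) * (\<theta> * m)" .
    qed
    finally show ?thesis by simp
  qed
  define Bad1 where "Bad1 = (\<Union>i\<in>{1..n-1}. {\<omega>\<in>space M. t < H i \<omega>})"
  define Bad2 where "Bad2 = (\<Union>i\<in>{0..n-1}. {\<omega>\<in>space M. atom E i (K + 1) \<omega> \<le> t})"
  define Ch where "Ch = {\<omega>\<in>space M. \<epsilon> * L / 4 \<le> \<bar>Z \<omega> - expectation Z\<bar>}"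
  have B1m: "Bad1 \<in> sets M" unfolding Bad1_def by (intro sets.finite_UN) auto
  have B2m: "Bad2 \<in> sets M" unfolding Bad2_def by (intro sets.finite_UN) auto
  have Chm: "Ch \<in> sets M" unfolding Ch_def by measurable
  have PB1: "measure M Bad1 \<le> 1 / (c * s)"
  proof -
    have "measure M Bad1 \<le> (\<Sum>i\<in>{1..n-1}. measure M {\<omega>\<in>space M. t < H i \<omega>})"
      unfolding Bad1_def by (intro finite_measure_subadditive_finite) auto
    also have "\<dots> = (\<Sum>i\<in>{1..n-1}. 1 / (1 + c * t))"
      using t0 by (intro sum.cong) (auto intro: H_dist)
    also have "\<dots> = real (n - 1) / (1 + c * t)" by simp
    also have "\<dots> \<le> real n / (c * t)"
      using c t0 n by (intro frac_le) auto
    also have "\<dots> = 1 / (c * s)" using n by (simp add: t_def)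
    finally show ?thesis .
  qed
  have PB2: "measure M Bad2 \<le> 2 / (\<theta> * s)"
  proof -
    have "measure M Bad2 \<le> (\<Sum>i\<in>{0..n-1}. measure M {\<omega>\<in>space M. atom E i (K + 1) \<omega> \<le> t})"
      unfolding Bad2_def by (intro finite_measure_subadditive_finite) auto
    also have "\<dots> \<le> (\<Sum>i\<in>{0..n-1}. 4 / (real K + 1))"
    proof (rule sum_mono)
      fix i
      show "measure M {\<omega>\<in>space M. atom E i (K + 1) \<omega> \<le> t} \<le> 4 / (real K + 1)"
        using erlang_small[OF th atom_dist[of "K + 1" i]] Kge by simp
    qed
    also have "\<dots> = real n * (4 / (real K + 1))" using n by simp
    also have "\<dots> \<le> real n * (4 / (2 * \<theta> * t))"
      using Kge th t0 by (intro mult_left_mono divide_left_mono) auto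
    also have "\<dots> = 2 / (\<theta> * s)" using n th s by (simp add: t_def field_simps)
    finally show ?thesis .
  qed
  have PCh: "measure M Ch \<le> real (n - 1) * (2 * \<theta> * t + 1) * \<theta> * m / (\<epsilon> * L / 4)\<^sup>2"
  proof -
    have "measure M Ch \<le> variance Z / (\<epsilon> * L / 4)\<^sup>2"
      unfolding Ch_def
    proof (rule Chebyshev_inequality)
      show "integrable M (\<lambda>x. (Z x)\<^sup>2)"
      proof (rule integrable_const_bound[where B="(real (n - 1) * real K)\<^sup>2"])
        show "AE x in M. norm ((Z x)\<^sup>2) \<le> (real (n - 1) * real K)\<^sup>2"
        proof (intro AE_I2)
          fix x
          have "0 \<le> Z x" unfolding Z_def using Y_bnd by (intro sum_nonneg) auto
          moreover have "Z x \<le> (\<Sum>i\<in>{1..n-1}. real K)" unfolding Z_def using Y_bnd by (intro sum_mono) auto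
          ultimately show "norm ((Z x)\<^sup>2) \<le> (real (n - 1) * real K)\<^sup>2"
            by (simp add: power_mono)
        qed
      qed auto
    qed (use e L0 in auto)
    also have "\<dots> \<le> real (n - 1) * (2 * \<theta> * t + 1) * \<theta> * m / (\<epsilon> * L / 4)\<^sup>2"
      using varZ by (intro divide_right_mono) auto
    finally show ?thesis .
  qed
  have incl: "AE \<omega> in M. \<omega> \<in> {\<omega>\<in>space M. \<bar>real (S H E n \<omega>) / L - \<theta> / c\<bar> > \<epsilon>} \<longrightarrow> \<omega> \<in> Bad1 \<union> Bad2 \<union> Ch"
    using E_nonneg
  proof eventually_elim
    fix \<omega> assume nn: "\<forall>i j. 1 \<le> j \<longrightarrow> 0 \<le> E i j \<omega>"
    show "\<omega> \<in> {\<omega>\<in>space M. \<bar>real (S H E n \<omega>) / L - \<theta> / c\<bar> > \<epsilon>} \<longrightarrow> \<omega> \<in> Bad1 \<union> Bad2 \<union> Ch"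
    proof (rule impI, rule ccontr)
      assume T: "\<omega> \<in> {\<omega>\<in>space M. \<bar>real (S H E n \<omega>) / L - \<theta> / c\<bar> > \<epsilon>}"
        and nb: "\<omega> \<notin> Bad1 \<union> Bad2 \<union> Ch"
      have sp: "\<omega> \<in> space M" using T by simp
      have Ht: "\<forall>i\<in>{1..n-1}. H i \<omega> \<le> t" using nb sp by (auto simp: Bad1_def not_less)
      have At: "\<forall>i\<in>{0..n-1}. t < atom E i (K + 1) \<omega>" using nb sp by (auto simp: Bad2_def not_le)
      have Zc: "\<bar>Z \<omega> - \<mu>\<bar> < \<epsilon> * L / 4" using nb sp by (auto simp: Ch_def EZ not_le)
      have g1: "Z \<omega> \<le> real (S H E n \<omega>)" "real (S H E n \<omega>) \<le> Z \<omega> + real K"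
        using good_event[OF n less_imp_le[OF t0] nn Ht At] by (simp_all add: Z_def)
      have mu1: "\<mu> \<le> (\<theta> / c + \<epsilon> / 2) * L"
        using mu_up C1 L0 by (simp add: pos_divide_le_eq mult.assoc)
      have mu2: "(\<theta> / c - \<epsilon> / 2) * L \<le> \<mu>"
        using mu_lo C2 L0 by (simp add: pos_le_divide_eq mult.assoc)
      have K4: "real K \<le> \<epsilon> * L / 4" using Kle C3 by linarith
      define eL where "eL = \<epsilon> * L"
      have mu1': "\<mu> \<le> \<theta> / c * L + eL / 2" using mu1 by (simp add: eL_def algebra_simps)
      have mu2': "\<theta> / c * L - eL / 2 \<le> \<mu>" using mu2 by (simp add: eL_def algebra_simps)
      have K4': "real K \<le> eL / 4" using K4 by (simp add: eL_def)
      have Zc': "\<bar>Z \<omega> - \<mu>\<bar> < eL / 4" using Zc by (simp add: eL_def)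
      have "\<bar>real (S H E n \<omega>) - \<theta> / c * L\<bar> < eL"
        using g1 mu1' mu2' K4' Zc' unfolding abs_less_iff by linarith
      then have AA: "\<bar>real (S H E n \<omega>) - \<theta> / c * L\<bar> < \<epsilon> * L" by (simp add: eL_def)
      have "real (S H E n \<omega>) / L - \<theta> / c = (real (S H E n \<omega>) - \<theta> / c * L) / L"
        using L0 by (simp add: diff_divide_distrib)
      then have "\<bar>real (S H E n \<omega>) / L - \<theta> / c\<bar> < \<epsilon>"
        using AA L0 by (simp add: abs_divide pos_divide_less_eq)
      then show False using T by simp
    qed
  qed
  have "measure M {\<omega>\<in>space M. \<bar>real (S H E n \<omega>) / L - \<theta> / c\<bar> > \<epsilon>} \<le> measure M (Bad1 \<union> Bad2 \<union> Ch)"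
    by (rule finite_measure_mono_AE[OF incl]) (use B1m B2m Chm in auto)
  also have "\<dots> \<le> measure M Bad1 + measure M Bad2 + measure M Ch"
    using B1m B2m Chm
    by (meson add_right_mono measure_Un_le order_trans sets.Un)
  also have "\<dots> \<le> 1 / (c * s) + 2 / (\<theta> * s) + real (n - 1) * (2 * \<theta> * t + 1) * \<theta> * m / (\<epsilon> * L / 4)\<^sup>2"
    using PB1 PB2 PCh by linarith
  finally show ?thesis .
qed

end



lemma lim1: "0 < c \<Longrightarrow> 0 < \<theta> \<Longrightarrow> 0 < s \<Longrightarrow> ((\<lambda>n::nat. (real n - 1) * \<theta> * (ln (1 + c * (real n * s)) / c - real n * s / (1 + c * (real n * s))) / (real n * ln (real n))) \<longlongrightarrow> \<theta> / c) sequentially"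
  by real_asymp (simp add: divide_inverse)
lemma lim2: "0 < c \<Longrightarrow> 0 < \<theta> \<Longrightarrow> 0 < s \<Longrightarrow> ((\<lambda>n::nat. (real n - 1) * \<theta> * (1 - 2 / (\<theta> * (real n * s))) * (ln (1 + c * (real n * s)) / c - real n * s / (1 + c * (real n * s))) / (real n * ln (real n))) \<longlongrightarrow> \<theta> / c) sequentially"
  by real_asymp (simp add: divide_inverse)
lemma lim3: "0 < c \<Longrightarrow> 0 < \<theta> \<Longrightarrow> 0 < s \<Longrightarrow> ((\<lambda>n::nat. (2 * \<theta> * (real n * s) + 1) / (real n * ln (real n))) \<longlongrightarrow> 0) sequentially"
  by real_asymp
lemma lim4: "0 < c \<Longrightarrow> 0 < \<theta> \<Longrightarrow> 0 < s \<Longrightarrow> 0 < e \<Longrightarrow> ((\<lambda>n::nat. (real n - 1) * (2 * \<theta> * (real n * s) + 1) * \<theta> * (ln (1 + c * (real n * s)) / c - real n * s / (1 + c * (real n * s))) / (e * (real n * ln (real n)) / 4)\<^sup>2) \<longlongrightarrow> 0) sequentially"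
  by real_asymp

theorem theorem2p4:
  fixes M :: "'a measure" and c \<theta> :: real
    and H :: "nat \<Rightarrow> 'a \<Rightarrow> real" and E :: "nat \<Rightarrow> nat \<Rightarrow> 'a \<Rightarrow> real"
  assumes "prob_space M"
    and "c > 0" and "\<theta> > 0"
    and indep: "prob_space.indep_vars M (\<lambda>_. borel) (driving H E) driving_index"
    and H_pos: "\<And>i. 1 \<le> i \<Longrightarrow> AE \<omega> in M. H i \<omega> > 0"
    and H_dist: "\<And>i x. 1 \<le> i \<Longrightarrow> x \<ge> 0 \<Longrightarrow>
                    measure M {\<omega> \<in> space M. H i \<omega> > x} = 1 / (1 + c * x)"
    and E_dist: "\<And>i j. 1 \<le> j \<Longrightarrow> distributed M lborel (E i j) (exponential_density \<theta>)"
  shows "\<forall>\<epsilon>>0. ((\<lambda>n. measure M {\<omega> \<in> space M.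
             \<bar>real (S H E n \<omega>) / (real n * ln (real n)) - \<theta> / c\<bar> > \<epsilon>}) \<longlongrightarrow> 0) sequentially"
proof -
  interpret cpp M c \<theta> H E
    unfolding cpp_def cpp_axioms_def using assms by auto
  have c: "0 < c" and th: "0 < \<theta>" using assms by auto
  show ?thesis
  proof (intro allI impI)
    fix \<epsilon> :: real assume e: "0 < \<epsilon>"
    show "((\<lambda>n. measure M {\<omega> \<in> space M.
             \<bar>real (S H E n \<omega>) / (real n * ln (real n)) - \<theta> / c\<bar> > \<epsilon>}) \<longlongrightarrow> 0) sequentially"
    proof (rule order_tendstoI)
      fix a :: real assume "a < 0"
      then show "eventually (\<lambda>n. a < measure M {\<omega> \<in> space M.
             \<bar>real (S H E n \<omega>) / (real n * ln (real n)) - \<theta> / c\<bar> > \<epsilon>}) sequentially"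
        by (intro always_eventually allI) (auto intro: less_le_trans[OF _ measure_nonneg])
    next
      fix \<eta> :: real assume eta: "0 < \<eta>"
      define s where "s = 4 * (1 / c + 2 / \<theta>) / \<eta>"
      have s: "0 < s" using c th eta unfolding s_def by (intro divide_pos_pos mult_pos_pos add_pos_pos) auto
      have ss: "1 / (c * s) + 2 / (\<theta> * s) = \<eta> / 4"
      proof -
        define A where "A = 1 / c + 2 / \<theta>"
        have A: "0 < A" using c th unfolding A_def by (intro add_pos_pos) auto
        have "1 / (c * s) + 2 / (\<theta> * s) = A / s" by (simp add: A_def add_divide_distrib)
        also have "\<dots> = \<eta> / 4" using A eta by (simp add: s_def A_def[symmetric])
        finally show ?thesis .
      qed
      have ev1: "eventually (\<lambda>n::nat. (real n - 1) * \<theta> * (ln (1 + c * (real n * s)) / c - real n * s / (1 + c * (real n * s))) / (real n * ln (real n)) < \<theta> / c + \<epsilon> / 2) sequentially"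
        by (rule order_tendstoD(2)[OF lim1[OF c th s]]) (use e in simp)
      have ev2: "eventually (\<lambda>n::nat. \<theta> / c - \<epsilon> / 2 < (real n - 1) * \<theta> * (1 - 2 / (\<theta> * (real n * s))) * (ln (1 + c * (real n * s)) / c - real n * s / (1 + c * (real n * s))) / (real n * ln (real n))) sequentially"
        by (rule order_tendstoD(1)[OF lim2[OF c th s]]) (use e in simp)
      have ev3: "eventually (\<lambda>n::nat. (2 * \<theta> * (real n * s) + 1) / (real n * ln (real n)) < \<epsilon> / 4) sequentially"
        by (rule order_tendstoD(2)[OF lim3[OF c th s]]) (use e in simp)
      have ev4: "eventually (\<lambda>n::nat. (real n - 1) * (2 * \<theta> * (real n * s) + 1) * \<theta> * (ln (1 + c * (real n * s)) / c - real n * s / (1 + c * (real n * s))) / (\<epsilon> * (real n * ln (real n)) / 4)\<^sup>2 < \<eta> / 2) sequentially"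
        by (rule order_tendstoD(2)[OF lim4[OF c th s e]]) (use eta in simp)
      have ev5: "eventually (\<lambda>n::nat. 2 \<le> n) sequentially" by (rule eventually_ge_at_top)
      show "eventually (\<lambda>n. measure M {\<omega> \<in> space M.
             \<bar>real (S H E n \<omega>) / (real n * ln (real n)) - \<theta> / c\<bar> > \<epsilon>} < \<eta>) sequentially"
        using ev1 ev2 ev3 ev4 ev5
      proof eventually_elim
        fix n :: nat
        assume C1: "(real n - 1) * \<theta> * (ln (1 + c * (real n * s)) / c - real n * s / (1 + c * (real n * s))) / (real n * ln (real n)) < \<theta> / c + \<epsilon> / 2"
          and C2: "\<theta> / c - \<epsilon> / 2 < (real n - 1) * \<theta> * (1 - 2 / (\<theta> * (real n * s))) * (ln (1 + c * (real n * s)) / c - real n * s / (1 + c * (real n * s))) / (real n * ln (real n))"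
          and C3: "(2 * \<theta> * (real n * s) + 1) / (real n * ln (real n)) < \<epsilon> / 4"
          and C4: "(real n - 1) * (2 * \<theta> * (real n * s) + 1) * \<theta> * (ln (1 + c * (real n * s)) / c - real n * s / (1 + c * (real n * s))) / (\<epsilon> * (real n * ln (real n)) / 4)\<^sup>2 < \<eta> / 2"
          and n: "2 \<le> n"
        have rn: "real (n - 1) = real n - 1" using n by (simp add: of_nat_diff)
        have rn2: "real (n - Suc 0) = real n - 1" using n by (simp add: of_nat_diff)
        have L0: "0 < real n * ln (real n)" using n by simp
        have C3': "2 * \<theta> * (real n * s) + 1 \<le> \<epsilon> * (real n * ln (real n)) / 4"
          using C3 L0 by (simp add: pos_divide_less_eq)
        have "measure M {\<omega> \<in> space M. \<bar>real (S H E n \<omega>) / (real n * ln (real n)) - \<theta> / c\<bar> > \<epsilon>}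
          \<le> 1 / (c * s) + 2 / (\<theta> * s) + real (n - 1) * (2 * \<theta> * (real n * s) + 1) * \<theta> * (ln (1 + c * (real n * s)) / c - real n * s / (1 + c * (real n * s))) / (\<epsilon> * (real n * ln (real n)) / 4)\<^sup>2"
          by (rule prob_bound[OF n s e]) (use C1 C2 C3' in \<open>simp_all add: rn rn2\<close>)
        also have "\<dots> < \<eta>"
          using C4 ss eta unfolding rn by linarith
        finally show "measure M {\<omega> \<in> space M. \<bar>real (S H E n \<omega>) / (real n * ln (real n)) - \<theta> / c\<bar> > \<epsilon>} < \<eta>" .
      qed
    qed
  qed
qed



end
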